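(* Let $g\in\mathcal{P}(\mathbb{R})$ be symmetric around $0$ with finite second moment, let $\beta,\sigma>0$ and $\gamma:=\beta+\sigma^2/2$. Then for every $\kappa$ with $0<\kappa<\kappa_P(g)$ the Penrose condition holds: there exists $\lambda\in(0,\sigma^2/2)$ such that $1-\frac{\kappa}{2}P(z)\ne0$ for all $z\in\mathbb{C}$ with $\Re(z)\in[-\lambda,\beta+\lambda]$.
   Context: For $z\in\mathbb{C}$ with $\Re(z)\in(-\sigma^2/2,\gamma)$, $P(z):=\int_{\mathbb{R}}\frac{g(\mathrm{d}\omega)}{(\gamma+i\omega-z)(\frac{\sigma^2}{2}+z-i\omega)}$. The Penrose constant is $\kappa_P(g):=\inf\{\kappa>0:\ \exists\theta\in\mathbb{R}\text{ such that }P(i\theta)=2/\kappa\}$. *)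

theory Defs
  imports "HOL-Probability.Probability"
begin

definition penroseP :: "real measure \<Rightarrow> real \<Rightarrow> real \<Rightarrow> complex \<Rightarrow> complex" where
  "penroseP g \<beta> \<sigma> z =
     (let \<gamma> = \<beta> + \<sigma>\<^sup>2 / 2 in
      LINT \<omega>|g. 1 / ((complex_of_real \<gamma> + \<i> * complex_of_real \<omega> - z) *
                     (complex_of_real (\<sigma>\<^sup>2 / 2) + z - \<i> * complex_of_real \<omega>)))"

text \<open>The Penrose constant, as an extended real (infimum of the empty set is +infinity).\<close>
definition kappaP :: "real measure \<Rightarrow> real \<Rightarrow> real \<Rightarrow> ereal" where
  "kappaP g \<beta> \<sigma> =
     Inf (ereal ` {\<kappa>::real. \<kappa> > 0 \<and>
         (\<exists>\<theta>::real. penroseP g \<beta> \<sigma> (\<i> * complex_of_real \<theta>) = complex_of_real (2 / \<kappa>))})"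

end

theory Submission
  imports Defs "HOL-Complex_Analysis.Complex_Analysis"
begin

definition Kt :: "real measure \<Rightarrow> real \<Rightarrow> real \<Rightarrow> complex \<Rightarrow> complex" where
  "Kt g r e z = (LINT \<omega>|g. 1 / (complex_of_real r + \<i> * complex_of_real (e * \<omega>) - z))"

lemma K_meas:
  assumes "sets g = sets borel"
  shows "(\<lambda>\<omega>. 1 / (complex_of_real r + \<i> * complex_of_real (e * \<omega>) - z)) \<in> borel_measurable g"
  using assms by (simp add: measurable_cong_sets[OF assms refl])

lemma norm_inv_le:
  fixes a :: complex
  assumes "0 < d" "d \<le> Re a"
  shows "norm (1 / a) \<le> 1 / d"
proof -
  have "d \<le> norm a" using assms complex_Re_le_cmod order_trans by blast
  then show ?thesis using assms by (simp add: norm_divide divide_simps)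
qed

lemma K_integrable:
  assumes "prob_space g" "sets g = sets borel" "Re z < r"
  shows "integrable g (\<lambda>\<omega>. 1 / (complex_of_real r + \<i> * complex_of_real (e * \<omega>) - z))"
proof -
  interpret prob_space g by fact
  show ?thesis
  proof (rule integrable_const_bound[where B="1/(r - Re z)"])
    show "AE x in g. norm (1 / (complex_of_real r + \<i> * complex_of_real (e * x) - z)) \<le> 1 / (r - Re z)"
      using assms by (intro AE_I2 norm_inv_le) auto
  qed (rule K_meas[OF assms(2)])
qed

lemma norm_int_le:
  fixes f :: "real \<Rightarrow> complex"
  assumes "prob_space M" "integrable M f" "integrable M h" "\<And>x. norm (f x) \<le> h x"
  shows "norm (integral\<^sup>L M f) \<le> integral\<^sup>L M h"
  using assms by (intro Bochner_Integration.integral_norm_bound_integral) auto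

lemma norm_int_le_const:
  fixes f :: "real \<Rightarrow> complex"
  assumes "prob_space M" "integrable M f" "\<And>x. norm (f x) \<le> B"
  shows "norm (integral\<^sup>L M f) \<le> B"
proof -
  interpret prob_space M by fact
  have "norm (integral\<^sup>L M f) \<le> integral\<^sup>L M (\<lambda>_. B)"
    using assms by (intro norm_int_le) auto
  then show ?thesis by (simp add: prob_space)
qed

lemma K_deriv:
  assumes "prob_space g" "sets g = sets borel" "Re z < r"
  shows "(Kt g r e has_field_derivative
           (LINT \<omega>|g. 1 / (complex_of_real r + \<i> * complex_of_real (e * \<omega>) - z)^2)) (at z)"
proof -
  interpret prob_space g by fact
  define a where "a = (\<lambda>\<omega>. complex_of_real r + \<i> * complex_of_real (e * \<omega>) - z)"
  define D where "D = (LINT \<omega>|g. 1 / (a \<omega>)^2)"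
  define r0 where "r0 = r - Re z"
  have r0: "r0 > 0" using assms r0_def by simp
  have Rea: "Re (a \<omega>) = r0" for \<omega> by (simp add: a_def r0_def)
  have ia: "integrable g (\<lambda>\<omega>. 1 / a \<omega>)" unfolding a_def by (rule K_integrable[OF assms])
  have ia2: "integrable g (\<lambda>\<omega>. 1 / (a \<omega>)^2)"
  proof (rule integrable_const_bound[where B="1/r0^2"])
    show "AE x in g. norm (1 / (a x)^2) \<le> 1 / r0^2"
    proof (intro AE_I2)
      fix x
      have "r0 \<le> norm (a x)" using Rea[of x] complex_Re_le_cmod by metis
      then have "r0^2 \<le> norm (a x)^2" using r0 by (intro power_mono) auto
      then show "norm (1 / (a x)^2) \<le> 1 / r0^2" using r0 
        by (simp add: norm_divide norm_power divide_simps)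
    qed
    show "(\<lambda>x. 1 / (a x)^2) \<in> borel_measurable g"
      unfolding a_def by (simp add: measurable_cong_sets[OF assms(2) refl])
  qed
  have bound: "norm ((Kt g r e y - Kt g r e z) / (y - z) - D) \<le> 2 / r0^3 * norm (y - z)"
    if y: "y \<noteq> z" "dist y z < r0 / 2" for y
  proof -
    define d where "d = y - z"
    have d0: "d \<noteq> 0" using y d_def by auto
    have nd: "norm d < r0/2" using y d_def by (simp add: dist_norm)
    have Rey: "Re y < r"
    proof -
      have "Re d \<le> norm d" by (rule complex_Re_le_cmod)
      moreover have "Re y = Re z + Re d" by (simp add: d_def)
      ultimately show ?thesis using nd r0_def r0 by linarith
    qed
    have ib: "integrable g (\<lambda>\<omega>. 1 / (a \<omega> - d))"
      using K_integrable[OF assms(1,2) Rey, of e] by (simp add: a_def d_def algebra_simps)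
    have Ky: "Kt g r e y = (LINT \<omega>|g. 1 / (a \<omega> - d))"
      by (simp add: Kt_def a_def d_def algebra_simps)
    have Kz: "Kt g r e z = (LINT \<omega>|g. 1 / a \<omega>)"
      by (simp add: Kt_def a_def)
    have na: "r0 \<le> norm (a \<omega>)" for \<omega> using Rea[of \<omega>] complex_Re_le_cmod by metis
    have nad: "r0/2 \<le> norm (a \<omega> - d)" for \<omega>
      using na[of \<omega>] nd norm_triangle_ineq2[of "a \<omega>" d] by linarith
    have a0: "a \<omega> \<noteq> 0" for \<omega> using na[of \<omega>] r0 by auto
    have ad0: "a \<omega> - d \<noteq> 0" for \<omega> using nad[of \<omega>] r0 by auto
    have pw: "(1 / (a \<omega> - d) - 1 / a \<omega>) / d - 1 / (a \<omega>)^2 = d / ((a \<omega>)^2 * (a \<omega> - d))" for \<omega>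
      using a0[of \<omega>] ad0[of \<omega>] d0 by (simp add: field_simps power2_eq_square)
    have "(Kt g r e y - Kt g r e z) / (y - z) - D
        = (LINT \<omega>|g. (1 / (a \<omega> - d) - 1 / a \<omega>) / d - 1 / (a \<omega>)^2)"
      using ia ib ia2 by (simp add: Ky Kz D_def d_def[symmetric])
    also have "\<dots> = (LINT \<omega>|g. d / ((a \<omega>)^2 * (a \<omega> - d)))"
      by (simp add: pw)
    finally have eq: "(Kt g r e y - Kt g r e z) / (y - z) - D = (LINT \<omega>|g. d / ((a \<omega>)^2 * (a \<omega> - d)))" .
    have pb: "norm (d / ((a \<omega>)^2 * (a \<omega> - d))) \<le> 2 / r0^3 * norm d" for \<omega>
    proof -
      have H: "r0^2 * (r0/2) \<le> norm (a \<omega>)^2 * norm (a \<omega> - d)"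
        using na[of \<omega>] nad[of \<omega>] r0 by (intro mult_mono power_mono) auto
      have pos: "0 < r0^2 * (r0/2)" using r0 by simp
      have pos2: "0 < norm (a \<omega>)^2 * norm (a \<omega> - d)" using H pos by linarith
      have "norm d / (norm (a \<omega>)^2 * norm (a \<omega> - d)) \<le> norm d / (r0^2 * (r0/2))"
        using divide_left_mono[OF H, of "norm d"] pos pos2 by simp
      also have "\<dots> = 2 / r0^3 * norm d" using r0 by (simp add: field_simps power3_eq_cube power2_eq_square)
      finally show ?thesis by (simp add: norm_divide norm_mult norm_power)
    qed
    have "integrable g (\<lambda>\<omega>. d / ((a \<omega>)^2 * (a \<omega> - d)))"
    proof -
      have "integrable g (\<lambda>\<omega>. (1 / (a \<omega> - d) - 1 / a \<omega>) / d - 1 / (a \<omega>)^2)"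
        using ia ib ia2 by auto
      then show ?thesis by (simp add: pw)
    qed
    then have "norm (LINT \<omega>|g. d / ((a \<omega>)^2 * (a \<omega> - d))) \<le> 2 / r0^3 * norm d"
      using pb by (intro norm_int_le_const[OF assms(1)]) auto
    then show ?thesis using eq d_def by simp
  qed
  have "((\<lambda>y. (Kt g r e y - Kt g r e z) / (y - z) - D) \<longlongrightarrow> 0) (at z)"
  proof (rule Lim_null_comparison)
    show "\<forall>\<^sub>F y in at z. norm ((Kt g r e y - Kt g r e z) / (y - z) - D) \<le> 2 / r0^3 * norm (y - z)"
      unfolding eventually_at using r0 bound by (intro exI[of _ "r0/2"]) auto
    show "((\<lambda>y. 2 / r0^3 * norm (y - z)) \<longlongrightarrow> 0) (at z)"
      by (intro tendsto_eq_intros) (auto intro: tendsto_ident_at)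
  qed
  then have "((\<lambda>y. (Kt g r e y - Kt g r e z) / (y - z)) \<longlongrightarrow> D) (at z)"
    by (simp add: LIM_zero_iff)
  then show ?thesis unfolding has_field_derivative_iff D_def a_def .
qed

lemma K_lip:
  assumes "prob_space g" "sets g = sets borel" "m > 0" "Re z \<le> r - m" "Re z' \<le> r - m"
  shows "norm (Kt g r e z - Kt g r e z') \<le> norm (z - z') / m^2"
proof -
  define a where "a = (\<lambda>\<omega> w. complex_of_real r + \<i> * complex_of_real (e * \<omega>) - w)"
  have na: "m \<le> norm (a \<omega> w)" if "Re w \<le> r - m" for \<omega> w
  proof -
    have "Re (a \<omega> w) \<le> norm (a \<omega> w)" by (rule complex_Re_le_cmod)
    moreover have "Re (a \<omega> w) = r - Re w" by (simp add: a_def)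
    ultimately show ?thesis using that by linarith
  qed
  have i1: "integrable g (\<lambda>\<omega>. 1 / a \<omega> z)" unfolding a_def
    using assms by (intro K_integrable) auto
  have i2: "integrable g (\<lambda>\<omega>. 1 / a \<omega> z')" unfolding a_def
    using assms by (intro K_integrable) auto
  have pw: "1 / a \<omega> z - 1 / a \<omega> z' = (z - z') / (a \<omega> z * a \<omega> z')" for \<omega>
  proof -
    have "a \<omega> z \<noteq> 0" "a \<omega> z' \<noteq> 0" using na[of z \<omega>] na[of z' \<omega>] assms by auto
    then show ?thesis by (simp add: a_def field_simps)
  qed
  have Kw: "Kt g r e w = (LINT \<omega>|g. 1 / a \<omega> w)" for w by (simp add: Kt_def a_def)
  have "Kt g r e z - Kt g r e z' = (LINT \<omega>|g. 1 / a \<omega> z - 1 / a \<omega> z')"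
    unfolding Kw using i1 i2 by simp
  also have "\<dots> = (LINT \<omega>|g. (z - z') / (a \<omega> z * a \<omega> z'))" by (simp only: pw)
  finally have eq: "Kt g r e z - Kt g r e z' = (LINT \<omega>|g. (z - z') / (a \<omega> z * a \<omega> z'))" .
  have int: "integrable g (\<lambda>\<omega>. (z - z') / (a \<omega> z * a \<omega> z'))"
    using Bochner_Integration.integrable_diff[OF i1 i2] by (simp only: pw)
  have pb: "norm ((z - z') / (a \<omega> z * a \<omega> z')) \<le> norm (z - z') / m^2" for \<omega>
  proof -
    have H: "m * m \<le> norm (a \<omega> z) * norm (a \<omega> z')"
      using na[of z \<omega>] na[of z' \<omega>] assms by (intro mult_mono) auto
    have pos: "0 < m * m" using assms by simp
    have "norm (z - z') / (norm (a \<omega> z) * norm (a \<omega> z')) \<le> norm (z - z') / (m * m)"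
      using divide_left_mono[OF H, of "norm (z - z')"] pos H by simp
    then show ?thesis by (simp add: norm_divide norm_mult power2_eq_square)
  qed
  show ?thesis unfolding eq using pb int by (intro norm_int_le_const[OF assms(1)]) auto
qed

lemma decay_pw:
  fixes a :: complex and m \<theta> \<omega> :: real
  assumes "m > 0" "m \<le> Re a" "\<bar>Im a\<bar> \<ge> \<bar>\<theta>\<bar> - \<bar>\<omega>\<bar>"
  shows "norm (1 / a) \<le> (1 + 1/m) * (1 + \<bar>\<omega>\<bar>) / (1 + \<bar>\<theta>\<bar>)"
proof -
  have n1: "m \<le> norm a" using assms complex_Re_le_cmod order_trans by blast
  have n2: "\<bar>Im a\<bar> \<le> norm a" by (rule abs_Im_le_cmod)
  have "1 + \<bar>\<theta>\<bar> \<le> (1 + \<bar>\<omega>\<bar>) * (1 + norm a)"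
    using assms n2 by (simp add: algebra_simps) (smt (verit) mult_nonneg_nonneg norm_ge_zero)
  also have "1 + norm a \<le> (1 + 1/m) * norm a"
    using n1 assms by (simp add: algebra_simps divide_simps)
  then have "(1 + \<bar>\<omega>\<bar>) * (1 + norm a) \<le> (1 + \<bar>\<omega>\<bar>) * ((1 + 1/m) * norm a)"
    by (intro mult_left_mono) auto
  finally have H: "1 + \<bar>\<theta>\<bar> \<le> (1 + \<bar>\<omega>\<bar>) * ((1 + 1/m) * norm a)" .
  have na: "norm a > 0" using n1 assms by linarith
  have "(1 + \<bar>\<theta>\<bar>) / norm a \<le> (1 + 1/m) * (1 + \<bar>\<omega>\<bar>)"
  proof -
    have "(1 + \<bar>\<omega>\<bar>) * ((1 + 1/m) * norm a) = (1 + 1/m) * (1 + \<bar>\<omega>\<bar>) * norm a" by simp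
    then show ?thesis using H na by (simp only: pos_divide_le_eq)
  qed
  then have "1 / norm a \<le> (1 + 1/m) * (1 + \<bar>\<omega>\<bar>) / (1 + \<bar>\<theta>\<bar>)"
    by (simp add: pos_le_divide_eq)
  then show ?thesis by (simp add: norm_divide)
qed

lemma K_decay:
  assumes "prob_space g" "sets g = sets borel" "m > 0" "Re z \<le> r - m" "\<bar>e\<bar> = 1"
    and "integrable g (\<lambda>\<omega>. \<bar>\<omega>\<bar>)"
  shows "norm (Kt g r e z) \<le> (1 + 1/m) * (1 + (LINT \<omega>|g. \<bar>\<omega>\<bar>)) / (1 + \<bar>Im z\<bar>)"
proof -
  interpret prob_space g by fact
  define c where "c = (1 + 1/m) / (1 + \<bar>Im z\<bar>)"
  have pw: "norm (1 / (complex_of_real r + \<i> * complex_of_real (e * \<omega>) - z)) \<le> c * (1 + \<bar>\<omega>\<bar>)" for \<omega>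
  proof -
    have "norm (1 / (complex_of_real r + \<i> * complex_of_real (e * \<omega>) - z)) \<le> (1 + 1/m) * (1 + \<bar>\<omega>\<bar>) / (1 + \<bar>Im z\<bar>)"
    proof (rule decay_pw)
      show "\<bar>Im z\<bar> - \<bar>\<omega>\<bar> \<le> \<bar>Im (complex_of_real r + \<i> * complex_of_real (e * \<omega>) - z)\<bar>"
      proof -
        have h: "\<bar>e * \<omega>\<bar> = \<bar>\<omega>\<bar>" using assms(5) by (simp add: abs_mult)
        have "Im (complex_of_real r + \<i> * complex_of_real (e * \<omega>) - z) = e * \<omega> - Im z" by simp
        then show ?thesis using h by arith
      qed
    qed (use assms in auto)
    then show ?thesis by (simp add: c_def)
  qed
  have "norm (Kt g r e z) \<le> (LINT \<omega>|g. c * (1 + \<bar>\<omega>\<bar>))"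
    unfolding Kt_def using assms pw
    by (intro norm_int_le[OF assms(1)] K_integrable) auto
  also have "\<dots> = c * (1 + (LINT \<omega>|g. \<bar>\<omega>\<bar>))"
    using assms(6) by (simp add: prob_space)
  finally show ?thesis by (simp add: c_def)
qed

lemma flip_int:
  fixes f :: "real \<Rightarrow> complex"
  assumes "sets g = sets borel" "distr g borel uminus = g" "f \<in> borel_measurable borel"
  shows "integral\<^sup>L g f = integral\<^sup>L g (\<lambda>x. f (- x))"
proof -
  have "integral\<^sup>L g f = integral\<^sup>L (distr g borel uminus) f" using assms by simp
  also have "\<dots> = integral\<^sup>L g (\<lambda>x. f (- x))"
    by (rule integral_distr) (use assms in \<open>auto simp: measurable_cong_sets[OF assms(1) refl]\<close>)
  finally show ?thesis .
qed

lemma K_flip: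
  assumes "sets g = sets borel" "distr g borel uminus = g"
  shows "Kt g r e z = Kt g r (- e) z"
  unfolding Kt_def by (subst flip_int[OF assms]) auto

lemma K_shift: "Kt g (r + t) e (complex_of_real t + w) = Kt g r e w"
  unfolding Kt_def by (simp add: algebra_simps)

definition Pf :: "real measure \<Rightarrow> real \<Rightarrow> real \<Rightarrow> complex \<Rightarrow> complex" where
  "Pf g \<beta> s z = (1 / complex_of_real (\<beta> + 2 * s)) * (Kt g (\<beta> + s) 1 z + Kt g s (-1) (- z))"

lemma pf_alg:
  fixes x y :: complex
  assumes "x \<noteq> 0" "y \<noteq> 0" "x + y \<noteq> 0"
  shows "1 / (x * y) = (1 / (x + y)) * (1 / x + 1 / y)"
  using assms by (simp add: field_simps)

lemma P_eq:
  assumes "prob_space g" "sets g = sets borel" "\<beta> > 0" "\<sigma> > 0"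
    and "- (\<sigma>\<^sup>2 / 2) < Re z" "Re z < \<beta> + \<sigma>\<^sup>2 / 2"
  shows "penroseP g \<beta> \<sigma> z = Pf g \<beta> (\<sigma>\<^sup>2 / 2) z"
proof -
  define s where "s = \<sigma>\<^sup>2 / 2"
  have s: "s > 0" unfolding s_def using assms(4) by simp
  define A where "A = (\<lambda>\<omega>. complex_of_real (\<beta> + s) + \<i> * complex_of_real (1 * \<omega>) - z)"
  define B where "B = (\<lambda>\<omega>. complex_of_real s + \<i> * complex_of_real (-1 * \<omega>) - (- z))"
  have ReA: "Re (A \<omega>) > 0" for \<omega> using assms by (simp add: A_def s_def)
  have ReB: "Re (B \<omega>) > 0" for \<omega> using assms by (simp add: B_def s_def)
  have A0: "A \<omega> \<noteq> 0" for \<omega> using ReA[of \<omega>] by auto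
  have B0: "B \<omega> \<noteq> 0" for \<omega> using ReB[of \<omega>] by auto
  have AB: "A \<omega> + B \<omega> = complex_of_real (\<beta> + 2 * s)" for \<omega>
    by (simp add: A_def B_def complex_eq_iff)
  have c0: "complex_of_real (\<beta> + 2 * s) \<noteq> 0"
  proof -
    have "\<beta> + 2 * s \<noteq> 0" using assms s by simp
    then show ?thesis by (simp only: of_real_eq_0_iff) simp
  qed
  have pw: "1 / ((complex_of_real (\<beta> + \<sigma>\<^sup>2 / 2) + \<i> * complex_of_real \<omega> - z) *
                     (complex_of_real (\<sigma>\<^sup>2 / 2) + z - \<i> * complex_of_real \<omega>))
        = (1 / complex_of_real (\<beta> + 2 * s)) * (1 / A \<omega> + 1 / B \<omega>)" for \<omega>
  proof -
    have "1 / (A \<omega> * B \<omega>) = (1 / (A \<omega> + B \<omega>)) * (1 / A \<omega> + 1 / B \<omega>)"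
      using A0 B0 AB c0 by (intro pf_alg) auto
    moreover have "A \<omega> * B \<omega> = (complex_of_real (\<beta> + \<sigma>\<^sup>2 / 2) + \<i> * complex_of_real \<omega> - z) *
                     (complex_of_real (\<sigma>\<^sup>2 / 2) + z - \<i> * complex_of_real \<omega>)"
      by (simp add: A_def B_def s_def algebra_simps)
    ultimately show ?thesis using AB by simp
  qed
  have iA: "integrable g (\<lambda>\<omega>. 1 / A \<omega>)" unfolding A_def
    using assms by (intro K_integrable) (auto simp: s_def)
  have iB: "integrable g (\<lambda>\<omega>. 1 / B \<omega>)" unfolding B_def
    using assms by (intro K_integrable) (auto simp: s_def)
  have "penroseP g \<beta> \<sigma> z = (LINT \<omega>|g. (1 / complex_of_real (\<beta> + 2 * s)) * (1 / A \<omega> + 1 / B \<omega>))"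
    unfolding penroseP_def Let_def pw by simp
  also have "\<dots> = (1 / complex_of_real (\<beta> + 2 * s)) * ((LINT \<omega>|g. 1 / A \<omega>) + (LINT \<omega>|g. 1 / B \<omega>))"
    using iA iB by simp
  also have "\<dots> = Pf g \<beta> s z" unfolding Pf_def Kt_def A_def B_def by simp
  finally show ?thesis by (simp add: s_def)
qed

lemma Pf_deriv:
  assumes "prob_space g" "sets g = sets borel" "- s < Re z" "Re z < \<beta> + s"
  shows "Pf g \<beta> s field_differentiable (at z)"
proof -
  obtain D1 where d1: "(Kt g (\<beta> + s) 1 has_field_derivative D1) (at z)"
    using K_deriv[OF assms(1,2), of z "\<beta> + s" 1] assms by auto
  obtain D2 where d2: "(Kt g s (-1) has_field_derivative D2) (at (- z))"
    using K_deriv[OF assms(1,2), of "- z" s "-1"] assms by auto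
  have d2': "((\<lambda>w. Kt g s (-1) (- w)) has_field_derivative D2 * (-1)) (at z)"
    using DERIV_chain[OF d2 DERIV_minus[OF DERIV_ident]] by (simp add: o_def)
  have "(Pf g \<beta> s has_field_derivative (1 / complex_of_real (\<beta> + 2 * s)) * (D1 + D2 * (-1))) (at z)"
    unfolding Pf_def[abs_def] by (intro DERIV_cmult DERIV_add d1 d2')
  then show ?thesis unfolding field_differentiable_def by blast
qed

lemma Pf_holo:
  assumes "prob_space g" "sets g = sets borel"
  shows "Pf g \<beta> s holomorphic_on {z. - s < Re z \<and> Re z < \<beta> + s}"
  unfolding holomorphic_on_def
  using Pf_deriv[OF assms] field_differentiable_at_within by blast

lemma Pf_lip:
  assumes "prob_space g" "sets g = sets borel" "\<beta> > 0" "s > 0"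
    and "- (s/2) \<le> Re z" "Re z \<le> \<beta> + s/2" "- (s/2) \<le> Re z'" "Re z' \<le> \<beta> + s/2"
  shows "norm (Pf g \<beta> s z - Pf g \<beta> s z') \<le> 2 / ((\<beta> + 2 * s) * (s/2)^2) * norm (z - z')"
proof -
  have h1: "norm (Kt g (\<beta> + s) 1 z - Kt g (\<beta> + s) 1 z') \<le> norm (z - z') / (s/2)^2"
    using assms by (intro K_lip) auto
  have h2: "norm (Kt g s (-1) (-z) - Kt g s (-1) (-z')) \<le> norm (- z - - z') / (s/2)^2"
    using assms by (intro K_lip) auto
  have n: "norm (- z - - z') = norm (z - z')" by (simp add: norm_minus_commute)
  have c: "\<beta> + 2 * s > 0" using assms by simp
  have nc: "cmod (complex_of_real \<beta> + 2 * complex_of_real s) = \<beta> + 2 * s"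
  proof -
    have "cmod (complex_of_real (\<beta> + 2 * s)) = \<beta> + 2 * s" using c by (simp only: norm_of_real)
    then show ?thesis by simp
  qed
  have "Pf g \<beta> s z - Pf g \<beta> s z' = (1 / complex_of_real (\<beta> + 2 * s)) *
     ((Kt g (\<beta> + s) 1 z - Kt g (\<beta> + s) 1 z') + (Kt g s (-1) (-z) - Kt g s (-1) (-z')))"
    unfolding Pf_def by (simp add: algebra_simps)
  then have "norm (Pf g \<beta> s z - Pf g \<beta> s z') = (1 / (\<beta> + 2 * s)) *
     norm ((Kt g (\<beta> + s) 1 z - Kt g (\<beta> + s) 1 z') + (Kt g s (-1) (-z) - Kt g s (-1) (-z')))"
    using c nc by (simp add: norm_mult norm_divide)
  also have "\<dots> \<le> (1 / (\<beta> + 2 * s)) * (norm (z - z') / (s/2)^2 + norm (z - z') / (s/2)^2)"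
    using h1 h2 n c by (intro mult_left_mono order_trans[OF norm_triangle_ineq] add_mono) auto
  also have "\<dots> = 2 / ((\<beta> + 2 * s) * (s/2)^2) * norm (z - z')"
    by (simp add: field_simps)
  finally show ?thesis .
qed

lemma Pf_decay:
  assumes "prob_space g" "sets g = sets borel" "\<beta> > 0" "s > 0"
    and "- (s/2) \<le> Re z" "Re z \<le> \<beta> + s/2" "integrable g (\<lambda>\<omega>. \<bar>\<omega>\<bar>)"
  shows "norm (Pf g \<beta> s z) \<le> 2 * ((1 + 1/(s/2)) * (1 + (LINT \<omega>|g. \<bar>\<omega>\<bar>))) / (\<beta> + 2 * s) / (1 + \<bar>Im z\<bar>)"
proof -
  define C where "C = (1 + 1/(s/2)) * (1 + (LINT \<omega>|g. \<bar>\<omega>\<bar>))"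
  have h1: "norm (Kt g (\<beta> + s) 1 z) \<le> C / (1 + \<bar>Im z\<bar>)"
    unfolding C_def using assms by (intro K_decay) auto
  have h2: "norm (Kt g s (-1) (-z)) \<le> C / (1 + \<bar>Im z\<bar>)"
    using K_decay[OF assms(1,2), of "s/2" "-z" s "-1"] assms by (auto simp: C_def)
  have c: "\<beta> + 2 * s > 0" using assms by simp
  have nc: "cmod (complex_of_real \<beta> + 2 * complex_of_real s) = \<beta> + 2 * s"
  proof -
    have "cmod (complex_of_real (\<beta> + 2 * s)) = \<beta> + 2 * s" using c by (simp only: norm_of_real)
    then show ?thesis by simp
  qed
  have "norm (Pf g \<beta> s z) = (1 / (\<beta> + 2 * s)) * norm (Kt g (\<beta> + s) 1 z + Kt g s (-1) (- z))"
    using c nc unfolding Pf_def by (simp add: norm_mult norm_divide)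
  also have "\<dots> \<le> (1 / (\<beta> + 2 * s)) * (C / (1 + \<bar>Im z\<bar>) + C / (1 + \<bar>Im z\<bar>))"
    using h1 h2 c by (intro mult_left_mono order_trans[OF norm_triangle_ineq] add_mono) auto
  also have "\<dots> = 2 * C / (\<beta> + 2 * s) / (1 + \<bar>Im z\<bar>)"
  proof -
    have "C / (1 + \<bar>Im z\<bar>) + C / (1 + \<bar>Im z\<bar>) = 2 * (C / (1 + \<bar>Im z\<bar>))" by simp
    then show ?thesis by simp
  qed
  finally show ?thesis by (simp add: C_def)
qed

lemma Pf_sym:
  assumes "sets g = sets borel" "distr g borel uminus = g"
  shows "Pf g \<beta> s (complex_of_real \<beta> - z) = Pf g \<beta> s z"
proof -
  have e1: "Kt g (\<beta> + s) 1 (complex_of_real \<beta> - z) = Kt g s (-1) (- z)"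
  proof -
    have "Kt g (\<beta> + s) 1 (complex_of_real \<beta> - z) = Kt g (s + \<beta>) 1 (complex_of_real \<beta> + (- z))"
      by (simp add: add.commute)
    also have "\<dots> = Kt g s 1 (- z)" by (rule K_shift)
    also have "\<dots> = Kt g s (-1) (- z)" by (rule K_flip[OF assms])
    finally show ?thesis .
  qed
  have e2: "Kt g s (-1) (- (complex_of_real \<beta> - z)) = Kt g (\<beta> + s) 1 z"
  proof -
    have "Kt g (\<beta> + s) 1 z = Kt g (\<beta> + s) (-1) z" by (rule K_flip[OF assms])
    also have "\<dots> = Kt g (s + \<beta>) (-1) (complex_of_real \<beta> + (z - complex_of_real \<beta>))"
      by (simp add: add.commute)
    also have "\<dots> = Kt g s (-1) (z - complex_of_real \<beta>)" by (rule K_shift)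
    finally show ?thesis by simp
  qed
  show ?thesis unfolding Pf_def e1 e2 by (simp add: add.commute)
qed

lemma abs_le_sq: "\<bar>x::real\<bar> \<le> 1 + x^2"
proof -
  have "0 \<le> (\<bar>x\<bar> - 1)^2" by simp
  then have "0 \<le> \<bar>x\<bar>^2 - 2 * \<bar>x\<bar> + 1" by (simp add: power2_diff)
  then show ?thesis by simp
qed

theorem lemma5p2:
  fixes g :: "real measure" and \<beta> \<sigma> \<kappa> :: real
  assumes "prob_space g"
    and "sets g = sets borel"
    and "distr g borel uminus = g"
    and "integrable g (\<lambda>x. x\<^sup>2)"
    and "\<beta> > 0" and "\<sigma> > 0"
    and "\<kappa> > 0" and "ereal \<kappa> < kappaP g \<beta> \<sigma>"
  shows "\<exists>lam::real. 0 < lam \<and> lam < \<sigma>\<^sup>2 / 2 \<and>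
           (\<forall>z::complex. -lam \<le> Re z \<and> Re z \<le> \<beta> + lam \<longrightarrow>
              1 - complex_of_real (\<kappa> / 2) * penroseP g \<beta> \<sigma> z \<noteq> 0)"
proof -
  note gp = assms(1) and gs = assms(2) and gsym = assms(3)
  have b: "\<beta> > 0" and k: "\<kappa> > 0" using assms by auto
  interpret prob_space g by fact
  define s where "s = \<sigma>\<^sup>2 / 2"
  have s: "s > 0" unfolding s_def using assms(6) by simp
  define m where "m = s / 2"
  have m: "m > 0" using s m_def by simp
  define F where "F = Pf g \<beta> s"
  define U where "U = {z. - s < Re z \<and> Re z < \<beta> + s}"
  have hol: "F holomorphic_on U" unfolding F_def U_def by (rule Pf_holo[OF gp gs])
  have cont: "continuous_on U F" using hol holomorphic_on_imp_continuous_on by blast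
  have PF: "penroseP g \<beta> \<sigma> z = F z" if "- s < Re z" "Re z < \<beta> + s" for z
    unfolding F_def s_def using that assms by (intro P_eq) (auto simp: s_def)
  have iabs: "integrable g (\<lambda>\<omega>. \<bar>\<omega>\<bar>)"
  proof (rule Bochner_Integration.integrable_bound[where f="\<lambda>x. 1 + x\<^sup>2"])
    show "integrable g (\<lambda>x. 1 + x\<^sup>2)" using assms(4) by simp
    show "(\<lambda>\<omega>. \<bar>\<omega>\<bar>) \<in> borel_measurable g" by (simp add: measurable_cong_sets[OF gs refl])
    show "AE x in g. norm \<bar>x\<bar> \<le> norm (1 + x\<^sup>2)"
      using abs_le_sq by (intro AE_I2) (auto simp: abs_le_sq)
  qed
  define C where "C = 2 * ((1 + 1/(s/2)) * (1 + (LINT \<omega>|g. \<bar>\<omega>\<bar>))) / (\<beta> + 2 * s)"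
  have C0: "C \<ge> 0"
  proof -
    have "0 \<le> (LINT \<omega>|g. \<bar>\<omega>\<bar>)" by (intro integral_nonneg_AE) auto
    then show ?thesis unfolding C_def using s b by simp
  qed
  have decay: "norm (F z) \<le> C / (1 + \<bar>Im z\<bar>)" if "- m \<le> Re z" "Re z \<le> \<beta> + m" for z
    unfolding F_def C_def using Pf_decay[OF gp gs b s, of z] that iabs by (simp add: m_def)
  define L where "L = 2 / ((\<beta> + 2 * s) * (s/2)^2)"
  have L: "L > 0" unfolding L_def using s b by simp
  have lip: "norm (F z - F z') \<le> L * norm (z - z')"
    if "- m \<le> Re z" "Re z \<le> \<beta> + m" "- m \<le> Re z'" "Re z' \<le> \<beta> + m" for z z'
    unfolding F_def L_def using Pf_lip[OF gp gs b s, of z z'] that by (simp add: m_def)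
  have sym: "F (complex_of_real \<beta> - z) = F z" for z
    unfolding F_def by (rule Pf_sym[OF gs gsym])
  have bnd: "F (\<i> * complex_of_real \<theta>) \<noteq> t" if "Im t = 0" "2 / \<kappa> \<le> Re t" for \<theta> t
  proof
    assume Ft: "F (\<i> * complex_of_real \<theta>) = t"
    have Rt: "Re t > 0" using that k by (smt (verit) divide_pos_pos)
    define k' where "k' = 2 / Re t"
    have k'0: "k' > 0" using Rt k'_def by simp
    have k'k: "k' \<le> \<kappa>"
    proof -
      have "2 \<le> \<kappa> * Re t" using that k by (simp add: divide_le_eq mult.commute)
      then show ?thesis unfolding k'_def using Rt by (simp add: divide_le_eq)
    qed
    have tt: "t = complex_of_real (2 / k')" using that Rt unfolding k'_def by (simp add: complex_eq_iff)
    have "penroseP g \<beta> \<sigma> (\<i> * complex_of_real \<theta>) = F (\<i> * complex_of_real \<theta>)"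
      using s b by (intro PF) auto
    then have "penroseP g \<beta> \<sigma> (\<i> * complex_of_real \<theta>) = complex_of_real (2 / k')" using Ft tt by simp
    then have "k' \<in> {\<kappa>::real. \<kappa> > 0 \<and>
         (\<exists>\<theta>::real. penroseP g \<beta> \<sigma> (\<i> * complex_of_real \<theta>) = complex_of_real (2 / \<kappa>))}"
      using k'0 by blast
    then have "kappaP g \<beta> \<sigma> \<le> ereal k'" unfolding kappaP_def by (intro Inf_lower) auto
    then have "ereal \<kappa> < ereal k'" using assms(8) less_le_trans by blast
    then show False using k'k by simp
  qed
  define R0 where "R0 = C * \<kappa> + 1"
  have R0: "R0 > 0"
  proof -
    have "0 \<le> C * \<kappa>" using C0 k by simp
    then show ?thesis unfolding R0_def by linarith
  qed
  have small: "norm (F z) < 1 / \<kappa>" if "- m \<le> Re z" "Re z \<le> \<beta> + m" "R0 \<le> \<bar>Im z\<bar>" for z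
  proof -
    have "norm (F z) \<le> C / (1 + \<bar>Im z\<bar>)" using decay that by blast
    also have "\<dots> \<le> C / (1 + R0)"
      using that C0 R0 by (intro divide_left_mono) auto
    also have "\<dots> < 1 / \<kappa>"
    proof -
      have "0 \<le> C * \<kappa>" using C0 k by simp
      then show ?thesis using C0 k unfolding R0_def
        by (simp add: divide_simps) (use mult_nonneg_nonneg[OF C0 less_imp_le[OF k]] in linarith)
    qed
    finally show ?thesis .
  qed
  have zi: "z = \<i> * complex_of_real (Im z)" if "Re z = 0" for z
    using that by (simp add: complex_eq_iff)
  have strip0: "\<not> (Im (F z) = 0 \<and> 2 / \<kappa> \<le> Re (F z))" if "0 \<le> Re z" "Re z \<le> \<beta>" for z
  proof
    assume zr: "Im (F z) = 0 \<and> 2 / \<kappa> \<le> Re (F z)"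
    define ray where "ray = {t::complex. Im t = 0 \<and> 2 / \<kappa> \<le> Re t}"
    define Q where "Q = cbox (Complex 0 (- R0)) (Complex \<beta> R0)"
    define S where "S = box (Complex 0 (- R0)) (Complex \<beta> R0)"
    define Z where "Z = Q \<inter> F -` ray"
    have QU: "Q \<subseteq> U" unfolding Q_def U_def using s by (auto simp: in_cbox_complex_iff)
    have SQ: "S \<subseteq> Q" unfolding S_def Q_def by (rule box_subset_cbox)
    have SU: "S \<subseteq> U" using SQ QU by blast
    have Sne: "S \<noteq> {}"
    proof -
      have "Complex (\<beta>/2) 0 \<in> S" unfolding S_def using b R0 by (simp add: in_box_complex_iff)
      then show ?thesis by blast
    qed
    have clS: "closure S = Q" using Sne unfolding S_def Q_def by simp
    have ray_cl: "closed ray" unfolding ray_def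
      by (intro closed_Collect_conj closed_Collect_eq closed_Collect_le continuous_intros)
    have Zcl: "closed Z" unfolding Z_def
      by (rule continuous_closed_preimage[OF continuous_on_subset[OF cont QU] _ ray_cl]) (simp add: Q_def closed_cbox)
    have cZ: "compact Z"
    proof -
      have "compact (Q \<inter> Z)" using compact_Int_closed[OF _ Zcl] by (simp add: Q_def)
      moreover have "Q \<inter> Z = Z" unfolding Z_def by blast
      ultimately show ?thesis by simp
    qed
    have inZ: "z \<in> Z"
    proof -
      have "\<bar>Im z\<bar> < R0"
      proof (rule ccontr)
        assume "\<not> \<bar>Im z\<bar> < R0"
        then have "norm (F z) < 1 / \<kappa>" using that m by (intro small) auto
        moreover have "Re (F z) \<le> norm (F z)" by (rule complex_Re_le_cmod)
        moreover have "1 / \<kappa> < 2 / \<kappa>" using k by (simp add: divide_strict_right_mono)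
        ultimately show False using zr by linarith
      qed
      then have "z \<in> Q" unfolding Q_def using that by (auto simp: in_cbox_complex_iff)
      then show ?thesis unfolding Z_def ray_def using zr by auto
    qed
    have ZU: "Z \<subseteq> U" using QU Z_def by blast
    have contZ: "continuous_on Z (\<lambda>y. Re (F y))"
      by (intro continuous_intros continuous_on_subset[OF cont ZU])
    obtain z0 where z0Z: "z0 \<in> Z" and z0max: "\<forall>y\<in>Z. Re (F y) \<le> Re (F z0)"
      using continuous_attains_sup[OF cZ _ contZ] inZ by blast
    have z0Q: "z0 \<in> Q" and Fz0: "Im (F z0) = 0" "2 / \<kappa> \<le> Re (F z0)"
      using z0Z unfolding Z_def ray_def by auto
    have z0r: "0 \<le> Re z0" "Re z0 \<le> \<beta>" "- R0 \<le> Im z0" "Im z0 \<le> R0"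
      using z0Q unfolding Q_def by (auto simp: in_cbox_complex_iff)
    have n1: "Re z0 \<noteq> 0"
    proof
      assume "Re z0 = 0"
      then have "F (\<i> * complex_of_real (Im z0)) = F z0" using zi by metis
      then show False using bnd[OF Fz0] by blast
    qed
    have n2: "Re z0 \<noteq> \<beta>"
    proof
      assume "Re z0 = \<beta>"
      then have "complex_of_real \<beta> - z0 = \<i> * complex_of_real (- Im z0)" by (simp add: complex_eq_iff)
      then have "F (\<i> * complex_of_real (- Im z0)) = F z0" using sym by metis
      then show False using bnd[OF Fz0] by blast
    qed
    have n3: "\<bar>Im z0\<bar> \<noteq> R0"
    proof
      assume "\<bar>Im z0\<bar> = R0"
      then have "norm (F z0) < 1 / \<kappa>" using z0r m by (intro small) auto
      moreover have "Re (F z0) \<le> norm (F z0)" by (rule complex_Re_le_cmod)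
      moreover have "1 / \<kappa> < 2 / \<kappa>" using k by (simp add: divide_strict_right_mono)
      ultimately show False using Fz0 by linarith
    qed
    have z0S: "z0 \<in> S" unfolding S_def using z0r n1 n2 n3
      by (auto simp: in_box_complex_iff)
    have ncst: "\<not> F constant_on S"
    proof
      assume "F constant_on S"
      then obtain c0 where c0: "\<And>x. x \<in> S \<Longrightarrow> F x = c0" by (auto simp: constant_on_def)
      define zb where "zb = Complex 0 (Im z0)"
      have zbQ: "zb \<in> closure S" unfolding clS zb_def Q_def using z0r by (simp add: in_cbox_complex_iff)
      have "F zb = c0"
        using continuous_constant_on_closure[of S F c0 zb] zbQ c0 continuous_on_subset[OF cont] QU clS
        by auto
      then have "F zb = F z0" using c0 z0S by simp
      moreover have "zb = \<i> * complex_of_real (Im z0)" unfolding zb_def by (simp add: complex_eq_iff)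
      ultimately show False using bnd[OF Fz0] by metis
    qed
    have holS: "F holomorphic_on S" using hol SU by (rule holomorphic_on_subset)
    have oS: "open S" unfolding S_def by (rule open_box)
    have cS: "connected S" unfolding S_def by (rule convex_connected[OF convex_box(2)])
    have "open (F ` S)"
      by (rule open_mapping_thm[OF holS oS cS oS subset_refl ncst])
    moreover have "F z0 \<in> F ` S" using z0S by blast
    ultimately obtain \<epsilon> where \<epsilon>: "\<epsilon> > 0" "ball (F z0) \<epsilon> \<subseteq> F ` S"
      by (meson open_contains_ball)
    define t1 where "t1 = F z0 + complex_of_real (\<epsilon>/2)"
    have "t1 \<in> ball (F z0) \<epsilon>" unfolding t1_def using \<epsilon> by (simp add: dist_norm)
    then obtain z1 where z1: "z1 \<in> S" "F z1 = t1" using \<epsilon> by blast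
    have "z1 \<in> Z" unfolding Z_def ray_def using z1 SQ Fz0 \<epsilon> by (auto simp: t1_def)
    then have "Re (F z1) \<le> Re (F z0)" using z0max by blast
    then show False using z1 \<epsilon> by (simp add: t1_def)
  qed
  define f where "f = (\<lambda>\<theta>::real. norm (F (\<i> * complex_of_real \<theta>) - complex_of_real (2 / \<kappa>)))"
  have contf: "continuous_on {- R0..R0} f"
  proof -
    have "continuous_on {- R0..R0} (\<lambda>\<theta>. F (\<i> * complex_of_real \<theta>))"
      by (rule continuous_on_compose2[OF cont]) (use s b in \<open>auto intro!: continuous_intros simp: U_def\<close>)
    then show ?thesis unfolding f_def by (intro continuous_intros)
  qed
  obtain \<theta>0 where \<theta>0: "\<theta>0 \<in> {- R0..R0}" "\<forall>\<theta>\<in>{- R0..R0}. f \<theta>0 \<le> f \<theta>"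
    using continuous_attains_inf[OF compact_Icc _ contf] R0 by auto
  define \<delta> where "\<delta> = min (f \<theta>0) (1 / \<kappa>)"
  have \<delta>: "\<delta> > 0"
  proof -
    have "F (\<i> * complex_of_real \<theta>0) \<noteq> complex_of_real (2 / \<kappa>)" by (rule bnd) auto
    then have "f \<theta>0 > 0" unfolding f_def by simp
    then show ?thesis unfolding \<delta>_def using k by simp
  qed
  have \<delta>le: "\<delta> \<le> f \<theta>" for \<theta>
  proof (cases "\<bar>\<theta>\<bar> \<le> R0")
    case True
    then have "\<theta> \<in> {- R0..R0}" by auto
    then have "f \<theta>0 \<le> f \<theta>" using \<theta>0 by blast
    then show ?thesis unfolding \<delta>_def by linarith
  next
    case False
    then have "norm (F (\<i> * complex_of_real \<theta>)) < 1 / \<kappa>" using m b by (intro small) auto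
    moreover have "norm (complex_of_real (2 / \<kappa>)) - norm (F (\<i> * complex_of_real \<theta>)) \<le> f \<theta>"
      unfolding f_def by (metis norm_minus_commute norm_triangle_ineq2)
    moreover have "norm (complex_of_real (2 / \<kappa>)) = 2 / \<kappa>" using k by (simp only: norm_of_real) simp
    ultimately have "1 / \<kappa> \<le> f \<theta>" by (simp add: field_simps)
    then show ?thesis unfolding \<delta>_def by simp
  qed
  define lam where "lam = min (m / 2) (\<delta> / (2 * L))"
  have lam: "lam > 0" unfolding lam_def using m \<delta> L by simp
  have lamL: "L * lam \<le> \<delta> / 2"
  proof -
    have "lam \<le> \<delta> / (2 * L)" unfolding lam_def by simp
    then have "L * lam \<le> L * (\<delta> / (2 * L))" using L by (intro mult_left_mono) auto
    also have "\<dots> = \<delta> / 2" using L by simp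
    finally show ?thesis .
  qed
  have lamm: "lam \<le> m / 2" unfolding lam_def by simp
  have near0: "F w \<noteq> complex_of_real (2 / \<kappa>)" if "- lam \<le> Re w" "Re w \<le> 0" for w
  proof
    assume Fw: "F w = complex_of_real (2 / \<kappa>)"
    define w0 where "w0 = \<i> * complex_of_real (Im w)"
    have "w - w0 = complex_of_real (Re w)" unfolding w0_def by (simp add: complex_eq_iff)
    then have nw: "norm (w - w0) = \<bar>Re w\<bar>" by simp
    have "norm (F w - F w0) \<le> L * norm (w - w0)"
      using that lamm m b by (intro lip) (auto simp: w0_def)
    also have "\<dots> \<le> L * lam" using nw that L by (intro mult_left_mono) auto
    also have "\<dots> \<le> \<delta> / 2" by (rule lamL)
    finally have "norm (F w - F w0) \<le> \<delta> / 2" .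
    moreover have "f (Im w) = norm (F w - F w0)"
      unfolding f_def w0_def Fw by (simp add: norm_minus_commute)
    ultimately show False using \<delta>le[of "Im w"] \<delta> by linarith
  qed
  show ?thesis
  proof (intro exI[of _ lam] conjI allI impI)
    show "0 < lam" by (rule lam)
    show "lam < \<sigma>\<^sup>2 / 2" using lamm s unfolding m_def s_def[symmetric] by simp
    fix z :: complex
    assume zr: "- lam \<le> Re z \<and> Re z \<le> \<beta> + lam"
    have Fz: "F z \<noteq> complex_of_real (2 / \<kappa>)"
    proof (cases "Re z < 0")
      case True
      then show ?thesis using near0 zr by simp
    next
      case n0: False
      show ?thesis
      proof (cases "Re z > \<beta>")
        case True
        have "F (complex_of_real \<beta> - z) \<noteq> complex_of_real (2 / \<kappa>)"
          using True zr by (intro near0) auto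
        then show ?thesis using sym by simp
      next
        case False
        then show ?thesis using strip0[of z] n0 by auto
      qed
    qed
    have "penroseP g \<beta> \<sigma> z = F z" using zr lamm m_def s by (intro PF) auto
    then show "1 - complex_of_real (\<kappa> / 2) * penroseP g \<beta> \<sigma> z \<noteq> 0"
    proof (intro notI)
      assume "penroseP g \<beta> \<sigma> z = F z" "1 - complex_of_real (\<kappa> / 2) * penroseP g \<beta> \<sigma> z = 0"
      then have e: "complex_of_real (\<kappa> / 2) * F z = 1" by simp
      have a0: "complex_of_real (\<kappa> / 2) \<noteq> 0" using k by simp
      have "F z = 1 / complex_of_real (\<kappa> / 2)" using e a0 by (simp add: eq_divide_eq mult.commute)
      also have "\<dots> = complex_of_real (2 / \<kappa>)" by simp
      finally have "F z = complex_of_real (2 / \<kappa>)" .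
      then show False using Fz by simp
    qed
  qed
qed

end
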